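(* Let $T$ be a $C_{p^rq^s}$-transfer system and let $(a,b)$ be the lexicographically smallest vertex of its connected component in $T$. Then every vertex $(x,y)$ in that connected component satisfies $a\le x$ and $b\le y$.
   Context: $p,q$ are distinct primes and $r,s\ge 0$ integers. The subgroups of the cyclic group $C_{p^rq^s}$ are identified with grid points $(i,j)$, $0\le i\le r$, $0\le j\le s$, where $(i,j)$ stands for $C_{p^iq^j}$; $(i,j)\le(i',j')$ as subgroups iff $i\le i'$ and $j\le j'$, and intersection is $(\min(i,i'),\min(j,j'))$. A $C_{p^rq^s}$-transfer system is a partial order $\to$ on these vertices such that: $(i_1,j_1)\to(i_2,j_2)$ implies $i_1\le i_2$, $j_1\le j_2$; it is reflexive and transitive; and $(i_1,j_1)\to(i_2,j_2)$ implies $(\min\{i_1,a\},\min\{j_1,b\})\to(\min\{i_2,a\},\min\{j_2,b\})$ for every vertex $(a,b)$. Connected components are those of the underlying undirected graph. Lexicographic order: $(a,b)<_L(c,d)$ if $a<c$, or $a=c$ and $b<d$. *)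

theory Defs
  imports "HOL-Computational_Algebra.Primes"
begin

text \<open>Vertices of the subgroup lattice of the cyclic group of order p^r q^s:
  (i,j) stands for the subgroup of order p^i q^j.\<close>
definition grid :: "nat \<Rightarrow> nat \<Rightarrow> (nat \<times> nat) set" where
  "grid r s = {0..r} \<times> {0..s}"

definition transfer_system :: "nat \<Rightarrow> nat \<Rightarrow> (nat \<times> nat \<Rightarrow> nat \<times> nat \<Rightarrow> bool) \<Rightarrow> bool" where
  "transfer_system r s T \<longleftrightarrow>
     (\<forall>u v. T u v \<longrightarrow> u \<in> grid r s \<and> v \<in> grid r s) \<and>
     (\<forall>i1 j1 i2 j2. T (i1, j1) (i2, j2) \<longrightarrow> i1 \<le> i2 \<and> j1 \<le> j2) \<and>
     (\<forall>u \<in> grid r s. T u u) \<and>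
     (\<forall>u v w. T u v \<longrightarrow> T v w \<longrightarrow> T u w) \<and>
     (\<forall>i1 j1 i2 j2 a b. T (i1, j1) (i2, j2) \<longrightarrow> (a, b) \<in> grid r s \<longrightarrow>
         T (min i1 a, min j1 b) (min i2 a, min j2 b))"

definition component :: "(nat \<times> nat \<Rightarrow> nat \<times> nat \<Rightarrow> bool) \<Rightarrow> nat \<times> nat \<Rightarrow> (nat \<times> nat) set" where
  "component T v = {w. (\<lambda>x y. T x y \<or> T y x)\<^sup>*\<^sup>* v w}"

definition lex_less :: "nat \<times> nat \<Rightarrow> nat \<times> nat \<Rightarrow> bool" where
  "lex_less u v \<longleftrightarrow> fst u < fst v \<or> (fst u = fst v \<and> snd u < snd v)"

end

theory Submission
  imports Defs
begin

lemma sym_rt: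
  assumes "(\<lambda>x y. T x y \<or> T y x)\<^sup>*\<^sup>* u w"
  shows "(\<lambda>x y. T x y \<or> T y x)\<^sup>*\<^sup>* w u"
  using assms
proof (induction rule: rtranclp_induct)
  case base then show ?case by simp
next
  case (step y z)
  have "(\<lambda>x y. T x y \<or> T y x) z y" using step(2) by blast
  then show ?case using step(3) by (rule converse_rtranclp_into_rtranclp)
qed

lemma grid_rt:
  assumes "transfer_system r s T" "v \<in> grid r s"
    "(\<lambda>x y. T x y \<or> T y x)\<^sup>*\<^sup>* v w"
  shows "w \<in> grid r s"
  using assms(3)
proof (induction rule: rtranclp_induct)
  case base then show ?case using assms(2) by simp
next
  case (step y z)
  then show ?case using assms(1) unfolding transfer_system_def by blast
qed

lemma min_rt:
  assumes "transfer_system r s T" "(c, d) \<in> grid r s"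
    "(\<lambda>x y. T x y \<or> T y x)\<^sup>*\<^sup>* u w"
  shows "(\<lambda>x y. T x y \<or> T y x)\<^sup>*\<^sup>* (min (fst u) c, min (snd u) d) (min (fst w) c, min (snd w) d)"
  using assms(3)
proof (induction rule: rtranclp_induct)
  case base then show ?case by simp
next
  case (step y z)
  have "T (min (fst y) c, min (snd y) d) (min (fst z) c, min (snd z) d) \<or>
        T (min (fst z) c, min (snd z) d) (min (fst y) c, min (snd y) d)"
  proof -
    have H: "\<And>i1 j1 i2 j2. T (i1, j1) (i2, j2) \<Longrightarrow> T (min i1 c, min j1 d) (min i2 c, min j2 d)"
      using assms(1,2) unfolding transfer_system_def by blast
    from step(2) show ?thesis
      using H[of "fst y" "snd y" "fst z" "snd z"] H[of "fst z" "snd z" "fst y" "snd y"] by auto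
  qed
  then show ?case using step(3) by (simp add: rtranclp.rtrancl_into_rtrancl)
qed

theorem mainTheorem9:
  fixes p q r s :: nat and T :: "nat \<times> nat \<Rightarrow> nat \<times> nat \<Rightarrow> bool"
    and v :: "nat \<times> nat" and a b :: nat
  assumes "prime p" and "prime q" and "p \<noteq> q"
    and "transfer_system r s T"
    and "v \<in> grid r s"
    and "(a, b) \<in> component T v"
    and "\<forall>w \<in> component T v. w \<noteq> (a, b) \<longrightarrow> lex_less (a, b) w"
  shows "\<forall>x y. (x, y) \<in> component T v \<longrightarrow> a \<le> x \<and> b \<le> y"
proof (intro allI impI)
  fix x y assume xy: "(x, y) \<in> component T v"
  let ?R = "\<lambda>x y. T x y \<or> T y x"
  have vab: "?R\<^sup>*\<^sup>* v (a, b)" and vxy: "?R\<^sup>*\<^sup>* v (x, y)"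
    using assms(6) xy unfolding component_def by auto
  have g: "(x, y) \<in> grid r s" using grid_rt[OF assms(4,5) vxy] .
  have ax: "a \<le> x"
    using assms(7) xy unfolding lex_less_def by force
  have abxy: "?R\<^sup>*\<^sup>* (a, b) (x, y)"
    using sym_rt[OF vab] vxy by (meson rtranclp_trans)
  have gab: "(a, b) \<in> grid r s" using grid_rt[OF assms(4,5) vab] .
  from min_rt[OF assms(4) _ abxy, of r y] g gab
  have amb: "?R\<^sup>*\<^sup>* (a, min b y) (x, y)" by (auto simp: grid_def min_absorb1)
  then have "?R\<^sup>*\<^sup>* v (a, min b y)"
    using vxy sym_rt[OF amb] by (meson rtranclp_trans)
  then have "(a, min b y) \<in> component T v" unfolding component_def by simp
  then have "b \<le> y"
    using assms(7) unfolding lex_less_def by (cases "b \<le> y") auto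
  with ax show "a \<le> x \<and> b \<le> y" by simp
qed

end
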